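(* Let $n\geq2$ and $N_n=\langle a\mid a^n=0\rangle$. (i) The identities satisfied by $N_n$ are axiomatized by $xy\approx yx$, $x^n\approx y_1y_2\cdots y_n$, and all identities $x_1^{e_1}x_2^{e_2}\cdots x_m^{e_m}\approx x_1^{f_1}x_2^{f_2}\cdots x_m^{f_m}$ with $m\geq1$, $e_1,\dots,e_m,f_1,\dots,f_m\geq1$ such that (a) $e=f<n$ where $e=\sum_{i=1}^me_i$ and $f=\sum_{i=1}^mf_i$, and (b) for each $k\in\{1,\dots,m\}$, either $e_k=f_k$ or $e+e_k,f+f_k\geq n$. (ii) The subpseudovariety of $\llbracket N_n\rrbracket$ defined by the identity $x^n\approx x^{n-1}$ is the unique maximal subpseudovariety of $\llbracket N_n\rrbracket$.
   Context: $N_n=\{0,a,\dots,a^{n-1}\}$ is the monogenic nilpotent semigroup of order $n$. Identities are between words over a countably infinite alphabet of variables with distinct letters $x,y,x_i,y_i$. A pseudovariety is a class of finite semigroups closed under finite direct products, subsemigroups and homomorphic images; $\llbracket S\rrbracket$ is the pseudovariety generated by $S$; a maximal subpseudovariety is a maximal proper subpseudovariety. *)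

theory Defs
  imports Main "HOL-Library.Nat_Bijection"
begin

record sg =
  carr :: "nat set"
  mul  :: "nat \<Rightarrow> nat \<Rightarrow> nat"

definition fin_semigroup :: "sg \<Rightarrow> bool" where
  "fin_semigroup S \<longleftrightarrow> finite (carr S) \<and> carr S \<noteq> {}
     \<and> (\<forall>x\<in>carr S. \<forall>y\<in>carr S. mul S x y \<in> carr S)
     \<and> (\<forall>x\<in>carr S. \<forall>y\<in>carr S. \<forall>z\<in>carr S.
            mul S (mul S x y) z = mul S x (mul S y z))"

definition subsg :: "sg \<Rightarrow> sg \<Rightarrow> bool" where
  "subsg T S \<longleftrightarrow> fin_semigroup T \<and> carr T \<subseteq> carr S
     \<and> (\<forall>x\<in>carr T. \<forall>y\<in>carr T. mul T x y = mul S x y)"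

definition hom_image :: "sg \<Rightarrow> sg \<Rightarrow> bool" where
  "hom_image T S \<longleftrightarrow> (\<exists>h. h ` carr S = carr T
     \<and> (\<forall>x\<in>carr S. \<forall>y\<in>carr S. h (mul S x y) = mul T (h x) (h y)))"

definition prod_sg :: "sg \<Rightarrow> sg \<Rightarrow> sg" where
  "prod_sg S T = \<lparr> carr = prod_encode ` (carr S \<times> carr T),
     mul = (\<lambda>p q. prod_encode (mul S (fst (prod_decode p)) (fst (prod_decode q)),
                                 mul T (snd (prod_decode p)) (snd (prod_decode q)))) \<rparr>"

definition pseudovariety :: "sg set \<Rightarrow> bool" where
  "pseudovariety V \<longleftrightarrow> V \<noteq> {} \<and> (\<forall>S\<in>V. fin_semigroup S)
     \<and> (\<forall>S\<in>V. \<forall>T\<in>V. prod_sg S T \<in> V)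
     \<and> (\<forall>S\<in>V. \<forall>T. subsg T S \<longrightarrow> T \<in> V)
     \<and> (\<forall>S\<in>V. \<forall>T. fin_semigroup T \<and> hom_image T S \<longrightarrow> T \<in> V)"

definition gen_pv :: "sg \<Rightarrow> sg set" where
  "gen_pv S = \<Inter>{V. pseudovariety V \<and> S \<in> V}"

definition maximal_subpv :: "sg set \<Rightarrow> sg set \<Rightarrow> bool" where
  "maximal_subpv V W \<longleftrightarrow> pseudovariety V \<and> V \<subset> W
     \<and> (\<forall>U. pseudovariety U \<and> V \<subseteq> U \<and> U \<subset> W \<longrightarrow> U = V)"

text \<open>N_n: a^k (1 \<le> k < n) is encoded by k, and 0 by n.\<close>
definition Nn :: "nat \<Rightarrow> sg" where
  "Nn n = \<lparr> carr = {1..n}, mul = (\<lambda>i j. min (i + j) n) \<rparr>"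

type_synonym word = "nat list"   \<comment> \<open>nonempty lists of variables\<close>

fun weval :: "sg \<Rightarrow> (nat \<Rightarrow> nat) \<Rightarrow> word \<Rightarrow> nat" where
  "weval S \<phi> [] = undefined"
| "weval S \<phi> [x] = \<phi> x"
| "weval S \<phi> (x # y # ys) = mul S (\<phi> x) (weval S \<phi> (y # ys))"

definition satisfies :: "sg \<Rightarrow> word \<times> word \<Rightarrow> bool" where
  "satisfies S uv \<longleftrightarrow> (\<forall>\<phi>. (\<forall>x. \<phi> x \<in> carr S) \<longrightarrow>
       weval S \<phi> (fst uv) = weval S \<phi> (snd uv))"

definition subst_word :: "(nat \<Rightarrow> word) \<Rightarrow> word \<Rightarrow> word" where
  "subst_word \<sigma> w = concat (map \<sigma> w)"

inductive derivable :: "(word \<times> word) set \<Rightarrow> word \<Rightarrow> word \<Rightarrow> bool"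
  for \<Sigma> where
  ax: "(u, v) \<in> \<Sigma> \<Longrightarrow> derivable \<Sigma> u v"
| refl: "u \<noteq> [] \<Longrightarrow> derivable \<Sigma> u u"
| sym: "derivable \<Sigma> u v \<Longrightarrow> derivable \<Sigma> v u"
| trans: "derivable \<Sigma> u v \<Longrightarrow> derivable \<Sigma> v w \<Longrightarrow> derivable \<Sigma> u w"
| subst: "derivable \<Sigma> u v \<Longrightarrow> (\<forall>x. \<sigma> x \<noteq> []) \<Longrightarrow>
          derivable \<Sigma> (subst_word \<sigma> u) (subst_word \<sigma> v)"
| mult: "derivable \<Sigma> u v \<Longrightarrow> derivable \<Sigma> u' v' \<Longrightarrow>
          derivable \<Sigma> (u @ u') (v @ v')"

definition eq_theory :: "sg \<Rightarrow> (word \<times> word) set" where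
  "eq_theory S = {(u, v). u \<noteq> [] \<and> v \<noteq> [] \<and> satisfies S (u, v)}"

definition pw :: "nat list \<Rightarrow> nat list \<Rightarrow> word" where
  "pw xs es = concat (map (\<lambda>(x, e). replicate e x) (zip xs es))"

definition Sigma_N :: "nat \<Rightarrow> (word \<times> word) set" where
  "Sigma_N n =
     {([x, y], [y, x]) | x y. x \<noteq> y}
   \<union> {(replicate n x, ys) | x ys. length ys = n \<and> distinct (x # ys)}
   \<union> {(pw xs es, pw xs fs) | xs es fs.
        let m = length xs; e = sum_list es; f = sum_list fs in
        m \<ge> 1 \<and> distinct xs \<and> length es = m \<and> length fs = m
        \<and> (\<forall>i<m. es ! i \<ge> 1 \<and> fs ! i \<ge> 1)
        \<and> e = f \<and> e < n
        \<and> (\<forall>k<m. es ! k = fs ! k \<or> (e + es ! k \<ge> n \<and> f + fs ! k \<ge> n))}"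

end

theory Submission imports Defs "HOL-Library.Multiset" begin

abbreviation ssum :: "(nat \<Rightarrow> nat) \<Rightarrow> word \<Rightarrow> nat" where
  "ssum g u \<equiv> sum_list (map g u)"

lemma weval_N:
  assumes "\<forall>x. \<phi> x \<in> {1..n}" "u \<noteq> []"
  shows "weval (Nn n) \<phi> u = min (ssum \<phi> u) n"
  using assms
proof (induction "Nn n" \<phi> u rule: weval.induct)
  case (2 \<phi> x)
  have "\<phi> x \<le> n" using 2 by auto
  then show ?case by (simp add: Nn_def)
next
  case (3 \<phi> x y ys)
  then show ?case by (simp add: Nn_def)
qed simp

lemma trunc_sum:
  "min (c + ssum (\<lambda>x. min (g x) n) u) n = min (c + ssum g u) n"
proof (induction u arbitrary: c)
  case Nil
  then show ?case by simp
next
  case (Cons x u)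
  have "min (c + ssum (\<lambda>x. min (g x) n) (x # u)) n
      = min ((c + min (g x) n) + ssum (\<lambda>x. min (g x) n) u) n" by (simp add: add.assoc)
  also have "\<dots> = min ((c + min (g x) n) + ssum g u) n" using Cons by simp
  also have "\<dots> = min (c + ssum g (x # u)) n" by (simp add: min_def)
  finally show ?case .
qed

lemma sat_N_iff:
  assumes "n \<ge> 1" "u \<noteq> []" "v \<noteq> []"
  shows "satisfies (Nn n) (u, v) \<longleftrightarrow> (\<forall>g. (\<forall>x. g x \<ge> 1) \<longrightarrow> min (ssum g u) n = min (ssum g v) n)"
proof
  assume s: "satisfies (Nn n) (u, v)"
  show "\<forall>g. (\<forall>x. g x \<ge> 1) \<longrightarrow> min (ssum g u) n = min (ssum g v) n"
  proof (intro allI impI)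
    fix g :: "nat \<Rightarrow> nat" assume g: "\<forall>x. g x \<ge> 1"
    define \<phi> where "\<phi> = (\<lambda>x. min (g x) n)"
    have ph: "\<forall>x. \<phi> x \<in> {1..n}" using g assms(1) by (auto simp: \<phi>_def)
    hence "\<forall>x. \<phi> x \<in> carr (Nn n)" by (simp add: Nn_def)
    hence "weval (Nn n) \<phi> u = weval (Nn n) \<phi> v" using s by (auto simp: satisfies_def)
    hence "min (ssum \<phi> u) n = min (ssum \<phi> v) n" using weval_N[OF ph] assms by simp
    thus "min (ssum g u) n = min (ssum g v) n"
      using trunc_sum[of 0 g n u] trunc_sum[of 0 g n v] by (simp add: \<phi>_def)
  qed
next
  assume h: "\<forall>g. (\<forall>x. g x \<ge> 1) \<longrightarrow> min (ssum g u) n = min (ssum g v) n"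
  show "satisfies (Nn n) (u, v)"
    unfolding satisfies_def
  proof (intro allI impI)
    fix \<phi> :: "nat \<Rightarrow> nat" assume "\<forall>x. \<phi> x \<in> carr (Nn n)"
    hence ph: "\<forall>x. \<phi> x \<in> {1..n}" by (simp add: Nn_def)
    hence "\<forall>x. \<phi> x \<ge> 1" by auto
    thus "weval (Nn n) \<phi> (fst (u, v)) = weval (Nn n) \<phi> (snd (u, v))"
      using h weval_N[OF ph] assms by simp
  qed
qed

lemma pw_Cons: "pw (x # xs) (e # es) = replicate e x @ pw xs es"
  by (simp add: pw_def)

lemma pw_Nil: "pw [] es = []"
  by (simp add: pw_def)

lemma ssum_pw:
  "length es = length xs \<Longrightarrow> ssum g (pw xs es) = (\<Sum>i<length xs. es ! i * g (xs ! i))"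
proof (induction xs arbitrary: es)
  case Nil
  then show ?case by (simp add: pw_Nil)
next
  case (Cons x xs)
  then obtain e es' where es: "es = e # es'" by (cases es) auto
  show ?case using Cons es by (simp add: pw_Cons sum.lessThan_Suc_shift sum_list_replicate del: sum.lessThan_Suc)
qed

lemma length_pw: "length es = length xs \<Longrightarrow> length (pw xs es) = sum_list es"
proof (induction xs arbitrary: es)
  case Nil
  then show ?case by (simp add: pw_Nil)
next
  case (Cons x xs)
  then obtain e es' where es: "es = e # es'" by (cases es) auto
  show ?case using Cons es by (simp add: pw_Cons)
qed

lemma sum_arg:
  fixes E F G :: "nat \<Rightarrow> nat"
  assumes G: "\<forall>i<m. G i \<ge> 1"
    and EF: "(\<Sum>i<m. E i) = (\<Sum>i<m. F i)"
    and c: "\<forall>k<m. E k = F k \<or> ((\<Sum>i<m. E i) + E k \<ge> n \<and> (\<Sum>i<m. F i) + F k \<ge> n)"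
  shows "min (\<Sum>i<m. E i * G i) n = min (\<Sum>i<m. F i * G i) n"
proof -
  have dE: "(\<Sum>i<m. E i * G i) = (\<Sum>i<m. E i) + (\<Sum>i<m. E i * (G i - 1))"
  proof -
    have "(\<Sum>i<m. E i * G i) = (\<Sum>i<m. E i + E i * (G i - 1))"
    proof (rule sum.cong)
      fix i assume "i \<in> {..<m}"
      hence "G i = 1 + (G i - 1)" using G by auto
      hence "E i * G i = E i * (1 + (G i - 1))" by simp
      thus "E i * G i = E i + E i * (G i - 1)" by (simp add: algebra_simps)
    qed simp
    thus ?thesis by (simp add: sum.distrib)
  qed
  have dF: "(\<Sum>i<m. F i * G i) = (\<Sum>i<m. F i) + (\<Sum>i<m. F i * (G i - 1))"
  proof -
    have "(\<Sum>i<m. F i * G i) = (\<Sum>i<m. F i + F i * (G i - 1))"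
    proof (rule sum.cong)
      fix i assume "i \<in> {..<m}"
      hence "G i = 1 + (G i - 1)" using G by auto
      hence "F i * G i = F i * (1 + (G i - 1))" by simp
      thus "F i * G i = F i + F i * (G i - 1)" by (simp add: algebra_simps)
    qed simp
    thus ?thesis by (simp add: sum.distrib)
  qed
  show ?thesis
  proof (cases "\<exists>k<m. E k \<noteq> F k \<and> G k \<ge> 2")
    case True
    then obtain k where k: "k < m" "E k \<noteq> F k" "G k \<ge> 2" by auto
    have "E k * (G k - 1) \<le> (\<Sum>i<m. E i * (G i - 1))"
      using k(1) by (intro member_le_sum) auto
    moreover have "E k \<le> E k * (G k - 1)" proof - have "1 \<le> G k - 1" using k(3) by simp
      from mult_le_mono2[OF this, of "E k"] show ?thesis by simp qed
    moreover have "n \<le> (\<Sum>i<m. E i) + E k" using c k by auto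
    ultimately have gE: "(\<Sum>i<m. E i * G i) \<ge> n" using dE by linarith
    have "F k * (G k - 1) \<le> (\<Sum>i<m. F i * (G i - 1))"
      using k(1) by (intro member_le_sum) auto
    moreover have "F k \<le> F k * (G k - 1)" proof - have "1 \<le> G k - 1" using k(3) by simp
      from mult_le_mono2[OF this, of "F k"] show ?thesis by simp qed
    moreover have "n \<le> (\<Sum>i<m. F i) + F k" using c k by auto
    ultimately have gF: "(\<Sum>i<m. F i * G i) \<ge> n" using dF by linarith
    show ?thesis using gE gF by (simp add: min_absorb2)
  next
    case False
    have "(\<Sum>i<m. E i * (G i - 1)) = (\<Sum>i<m. F i * (G i - 1))"
    proof (rule sum.cong)
      fix i assume "i \<in> {..<m}"
      show "E i * (G i - 1) = F i * (G i - 1)"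
      proof (cases "E i = F i")
        case False': False
        have "i < m" using \<open>i \<in> {..<m}\<close> by simp
        hence "G i = 1" using False False' G by force
        thus ?thesis by simp
      qed simp
    qed simp
    thus ?thesis using dE dF EF by simp
  qed
qed


lemma ssum_const1: "ssum (\<lambda>_. 1) u = length u"
  by (induction u) auto

lemma ssum_const1'[simp]: "ssum (\<lambda>_. Suc 0) u = length u"
  by (induction u) auto

lemma ssum_ge_length: "\<forall>x. g x \<ge> 1 \<Longrightarrow> ssum g u \<ge> length u"
proof (induction u)
  case (Cons a u)
  hence ga: "g a \<ge> 1" by auto
  have h1: "length u \<le> ssum g u" using Cons by simp
  show ?case using ga h1 by simp
qed simp

lemma sum_list_nth_sum: "sum_list es = (\<Sum>i<length es. es ! i)"
  by (simp add: sum_list_sum_nth atLeast0LessThan)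

lemma pw_nonempty:
  assumes "length xs \<ge> 1" "length es = length xs" "\<forall>i<length xs. es ! i \<ge> 1"
  shows "pw xs es \<noteq> []"
proof -
  obtain x xs' where xs: "xs = x # xs'" using assms(1) by (cases xs) auto
  obtain e es' where es: "es = e # es'" using assms(1,2) by (cases es) auto
  have "e \<ge> 1" using assms(3) xs es by force
  thus ?thesis using xs es by (simp add: pw_Cons)
qed

lemma Sigma_N_nonempty:
  assumes "n \<ge> 2" "(u, v) \<in> Sigma_N n"
  shows "u \<noteq> [] \<and> v \<noteq> []"
proof -
  consider (c) x y where "u = [x, y]" "v = [y, x]"
    | (z) x ys where "u = replicate n x" "length ys = n" "v = ys"
    | (p) xs es fs where "u = pw xs es" "v = pw xs fs"
      "length es = length xs" "length fs = length xs" "length xs \<ge> 1"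
      "\<forall>i<length xs. es ! i \<ge> 1 \<and> fs ! i \<ge> 1"
    using assms(2) unfolding Sigma_N_def Let_def by auto
  then show ?thesis
  proof cases
    case p
    then show ?thesis using pw_nonempty[of xs es] pw_nonempty[of xs fs] by auto
  qed (use assms(1) in auto)
qed

lemma Sigma_N_sound:
  assumes "n \<ge> 2" "(u, v) \<in> Sigma_N n" "\<forall>x. g x \<ge> 1"
  shows "min (ssum g u) n = min (ssum g v) n"
proof -
  consider (c) x y where "u = [x, y]" "v = [y, x]"
    | (z) x ys where "u = replicate n x" "length ys = n" "v = ys"
    | (p) xs es fs where "u = pw xs es" "v = pw xs fs"
      "length es = length xs" "length fs = length xs"
      "sum_list es = sum_list fs" "sum_list es < n"
      "\<forall>k<length xs. es ! k = fs ! k \<or> (sum_list es + es ! k \<ge> n \<and> sum_list fs + fs ! k \<ge> n)"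
    using assms(2) unfolding Sigma_N_def Let_def by auto
  then show ?thesis
  proof cases
    case c
    then show ?thesis by simp
  next
    case z
    have "ssum g u \<ge> n" using z ssum_ge_length[OF assms(3), of u] by simp
    moreover have "ssum g v \<ge> n" using z ssum_ge_length[OF assms(3), of v] by simp
    ultimately show ?thesis by (simp add: min_absorb2)
  next
    case p
    show ?thesis
      unfolding p(1,2) ssum_pw[OF p(3)] ssum_pw[OF p(4)]
      apply (rule sum_arg)
      using assms(3) p(3-7) by (auto simp: sum_list_nth_sum)
  qed
qed

lemma ssum_subst: "ssum g (subst_word \<sigma> u) = ssum (\<lambda>x. ssum g (\<sigma> x)) u"
  by (induction u) (simp_all add: subst_word_def)

lemma subst_nonempty: "u \<noteq> [] \<Longrightarrow> \<forall>x. \<sigma> x \<noteq> [] \<Longrightarrow> subst_word \<sigma> u \<noteq> []"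
  by (cases u) (auto simp: subst_word_def)

lemma derivable_sound:
  assumes "n \<ge> 2" "derivable (Sigma_N n) u v"
  shows "u \<noteq> [] \<and> v \<noteq> [] \<and> (\<forall>g. (\<forall>x. g x \<ge> 1) \<longrightarrow> min (ssum g u) n = min (ssum g v) n)"
  using assms(2)
proof (induction rule: derivable.induct)
  case (ax u v)
  then show ?case using Sigma_N_nonempty[OF assms(1)] Sigma_N_sound[OF assms(1)] by blast
next
  case (refl u)
  then show ?case by simp
next
  case (sym u v)
  then show ?case by simp
next
  case (trans u v w)
  then show ?case by simp
next
  case (subst u v \<sigma>)
  show ?case
  proof (intro conjI allI impI)
    show "subst_word \<sigma> u \<noteq> []" "subst_word \<sigma> v \<noteq> []" using subst subst_nonempty by auto
    fix g :: "nat \<Rightarrow> nat" assume g: "\<forall>x. g x \<ge> 1"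
    have "\<forall>x. ssum g (\<sigma> x) \<ge> 1"
    proof
      fix x
      have "ssum g (\<sigma> x) \<ge> length (\<sigma> x)" using ssum_ge_length[OF g] .
      moreover have "length (\<sigma> x) \<ge> 1" using subst(2) by (simp add: Suc_le_eq)
      ultimately show "ssum g (\<sigma> x) \<ge> 1" by simp
    qed
    thus "min (ssum g (subst_word \<sigma> u)) n = min (ssum g (subst_word \<sigma> v)) n"
      using subst(3) by (simp add: ssum_subst)
  qed
next
  case (mult u v u' v')
  show ?case
  proof (intro conjI allI impI)
    show "u @ u' \<noteq> []" "v @ v' \<noteq> []" using mult by auto
    fix g :: "nat \<Rightarrow> nat" assume g: "\<forall>x. g x \<ge> 1"
    have e1: "min (ssum g u) n = min (ssum g v) n" using mult g by blast
    have e2: "min (ssum g u') n = min (ssum g v') n" using mult g by blast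
    have "min (ssum g (u @ u')) n = min (min (ssum g u) n + min (ssum g u') n) n"
      by (simp add: min_def)
    also have "\<dots> = min (min (ssum g v) n + min (ssum g v') n) n" using e1 e2 by simp
    also have "\<dots> = min (ssum g (v @ v')) n" by (simp add: min_def)
    finally show "min (ssum g (u @ u')) n = min (ssum g (v @ v')) n" .
  qed
qed


lemma comm_ax: "([0, 1], [1, 0]) \<in> Sigma_N n"
  unfolding Sigma_N_def by auto

lemma der_comm:
  assumes "a \<noteq> []" "b \<noteq> []"
  shows "derivable (Sigma_N n) (a @ b) (b @ a)"
proof -
  define \<sigma> where "\<sigma> = (\<lambda>i::nat. if i = 0 then a else b)"
  have "derivable (Sigma_N n) (subst_word \<sigma> [0, 1]) (subst_word \<sigma> [1, 0])"
    by (rule derivable.subst[OF derivable.ax[OF comm_ax]]) (use assms in \<open>auto simp: \<sigma>_def\<close>)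
  thus ?thesis by (simp add: subst_word_def \<sigma>_def)
qed

lemma der_cong:
  assumes "derivable S u v"
  shows "derivable S (a @ u @ b) (a @ v @ b)"
proof -
  have "derivable S (u @ b) (v @ b)"
  proof (cases "b = []")
    case False
    then show ?thesis using derivable.mult[OF assms derivable.refl[OF False]] by simp
  qed (use assms in simp)
  then show ?thesis
  proof (cases "a = []")
    case False
    then show ?thesis using derivable.mult[OF derivable.refl[OF False]] \<open>derivable S (u @ b) (v @ b)\<close> by simp
  qed simp
qed


lemma der_perm:
  assumes "u \<noteq> []" "mset u = mset w"
  shows "derivable (Sigma_N n) u w"
  using assms
proof (induction u arbitrary: w)
  case Nil
  then show ?case by simp
next
  case (Cons x u')
  have "x \<in> set w" using Cons.prems(2) by (metis list.set_intros(1) set_mset_mset)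
  then obtain w1 w2 where w: "w = w1 @ x # w2" by (meson split_list)
  have m: "mset u' = mset (w1 @ w2)" using Cons.prems(2) w by simp
  show ?case
  proof (cases "u' = []")
    case True
    then have "w1 @ w2 = []" using m by simp
    then show ?thesis using w True by (simp add: derivable.refl)
  next
    case False
    have d1: "derivable (Sigma_N n) (x # u') (x # w1 @ w2)"
      using der_cong[OF Cons.IH[OF False m], of "[x]" "[]"] by simp
    have d2: "derivable (Sigma_N n) (x # w1 @ w2) (w1 @ x # w2)"
    proof (cases "w1 = []")
      case True
      then show ?thesis by (simp add: derivable.refl)
    next
      case False
      show ?thesis using der_cong[OF der_comm[of "[x]" w1 n, OF _ False], of "[]" w2] by simp
    qed
    show ?thesis using derivable.trans[OF d1 d2] w by simp
  qed
qed

lemma concat_single: "concat (map (\<lambda>i. [f i]) xs) = map f xs"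
  by (induction xs) auto

lemma concat_rep: "concat (replicate n [a]) = replicate n a"
  by (induction n) auto

lemma long_ax: "(replicate n 0, [1..<Suc n]) \<in> Sigma_N n"
proof -
  have "distinct (0 # [1..<Suc n])" by simp
  hence "(replicate n 0, [1..<Suc n]) \<in> {(replicate n x, ys) | x ys. length ys = n \<and> distinct (x # ys)}"
    by (intro CollectI exI[of _ 0] exI[of _ "[1..<Suc n]"]) simp
  thus ?thesis unfolding Sigma_N_def by (intro UnI1 UnI2)
qed

lemma der_long:
  assumes "n \<ge> 2" "length w \<ge> n"
  shows "derivable (Sigma_N n) (replicate n 0) w"
proof -
  define \<sigma> where "\<sigma> = (\<lambda>i::nat. if i = 0 then [0] else if i < n then [w ! (i - 1)] else drop (n - 1) w)"
  have ne: "\<forall>x. \<sigma> x \<noteq> []" using assms by (auto simp: \<sigma>_def)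
  have "\<sigma> 0 = [0]" by (simp add: \<sigma>_def)
  hence r: "subst_word \<sigma> (replicate n 0) = replicate n 0"
    by (simp add: subst_word_def concat_rep)
  have mm: "map \<sigma> [1..<n] = map (\<lambda>i. [w ! (i - 1)]) [1..<n]"
    by (rule map_cong) (auto simp: \<sigma>_def)
  have "concat (map \<sigma> [1..<n]) = map (\<lambda>i. w ! (i - 1)) [1..<n]"
    unfolding mm by (rule concat_single)
  also have "\<dots> = take (n - 1) w"
    by (rule nth_equalityI) (use assms in auto)
  finally have t: "concat (map \<sigma> [1..<n]) = take (n - 1) w" .
  have "[1..<Suc n] = [1..<n] @ [n]" using assms by simp
  hence "subst_word \<sigma> [1..<Suc n] = concat (map \<sigma> [1..<n]) @ \<sigma> n"
    by (simp add: subst_word_def)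
  moreover have "\<sigma> n = drop (n - 1) w" using assms by (simp add: \<sigma>_def)
  ultimately have s: "subst_word \<sigma> [1..<Suc n] = w" using t by simp
  have "derivable (Sigma_N n) (subst_word \<sigma> (replicate n 0)) (subst_word \<sigma> [1..<Suc n])"
    by (rule derivable.subst[OF derivable.ax[OF long_ax] ne])
  thus ?thesis by (simp only: r s)
qed

lemma mset_pw:
  assumes "distinct xs" "set xs = set w"
  shows "mset (pw xs (map (count_list w) xs)) = mset w"
proof -
  have "\<And>y. count (mset (pw xs (map (count_list w) xs))) y = (if y \<in> set xs then count_list w y else 0)"
    using assms(1)
  proof (induction xs)
    case Nil
    then show ?case by (simp add: pw_Nil)
  next
    case (Cons x xs)
    have d: "x \<notin> set xs" "distinct xs" using Cons.prems by auto
    have IH: "count (mset (pw xs (map (count_list w) xs))) y = (if y \<in> set xs then count_list w y else 0)"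
      using Cons.IH[OF d(2)] .
    have e: "pw (x # xs) (map (count_list w) (x # xs)) = replicate (count_list w x) x @ pw xs (map (count_list w) xs)"
      by (simp add: pw_Cons)
    show ?case unfolding e using IH d(1) by (cases "y = x") auto
  qed
  thus ?thesis using assms(2) by (auto simp: multiset_eq_iff count_mset)
qed

lemma ssum_count: "ssum (\<lambda>x. if x = y then 2 else 1) u = length u + count_list u y"
proof (induction u)
  case (Cons a u)
  show ?case
  proof (cases "a = y")
    case True
    then show ?thesis using Cons by simp
  next
    case False
    then show ?thesis using Cons by simp
  qed
qed simp


lemma set_eq_from_sat:
  assumes sat: "\<forall>g. (\<forall>x. g x \<ge> 1) \<longrightarrow> min (ssum g u) n = min (ssum g v) n"
    and lt: "length u < n"
  shows "set v \<subseteq> set u"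
proof
  fix y assume yv: "y \<in> set v"
  show "y \<in> set u"
  proof (rule ccontr)
    assume yu: "y \<notin> set u"
    define g where "g = (\<lambda>x. if x = y then n else 1)"
    have g1: "\<forall>x. g x \<ge> 1" using lt by (auto simp: g_def)
    have "map g u = map (\<lambda>_. 1) u" using yu by (auto simp: g_def)
    hence "ssum g u = ssum (\<lambda>_. 1) u" by (rule arg_cong[where f=sum_list])
    hence "ssum g u = length u" by simp
    moreover have "g y \<le> ssum g v" using yv by (simp add: member_le_sum_list)
    moreover have "g y = n" by (simp add: g_def)
    ultimately have "n \<le> ssum g v" "ssum g u < n" using lt by auto
    moreover have "min (ssum g u) n = min (ssum g v) n" using sat g1 by blast
    ultimately show False by (simp add: min_def split: if_splits)
  qed
qed

lemma sigma3_mem: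
  assumes "length xs \<ge> 1" "distinct xs" "length es = length xs" "length fs = length xs"
    "\<forall>i<length xs. es ! i \<ge> 1 \<and> fs ! i \<ge> 1"
    "sum_list es = sum_list fs" "sum_list es < n"
    "\<forall>k<length xs. es ! k = fs ! k \<or> (sum_list es + es ! k \<ge> n \<and> sum_list fs + fs ! k \<ge> n)"
  shows "(pw xs es, pw xs fs) \<in> Sigma_N n"
proof -
  have "(pw xs es, pw xs fs) \<in> {(pw xs es, pw xs fs) | xs es fs.
        let m = length xs; e = sum_list es; f = sum_list fs in
        m \<ge> 1 \<and> distinct xs \<and> length es = m \<and> length fs = m
        \<and> (\<forall>i<m. es ! i \<ge> 1 \<and> fs ! i \<ge> 1)
        \<and> e = f \<and> e < n
        \<and> (\<forall>k<m. es ! k = fs ! k \<or> (e + es ! k \<ge> n \<and> f + fs ! k \<ge> n))}"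
    by (intro CollectI exI[of _ xs] exI[of _ es] exI[of _ fs]) (use assms in \<open>simp add: Let_def\<close>)
  thus ?thesis unfolding Sigma_N_def by (intro UnI2)
qed

lemma minlem: "min (e + a) n = min (e + b) (n::nat) \<Longrightarrow> a = b \<or> (e + a \<ge> n \<and> e + b \<ge> n)"
  by (auto simp: min_def split: if_splits)

lemma complete:
  assumes n2: "n \<ge> 2" and ne: "u \<noteq> []" "v \<noteq> []"
    and sat: "\<forall>g. (\<forall>x. g x \<ge> 1) \<longrightarrow> min (ssum g u) n = min (ssum g v) n"
  shows "derivable (Sigma_N n) u v"
proof -
  have "min (ssum (\<lambda>_. 1) u) n = min (ssum (\<lambda>_. 1) v) n" using sat[rule_format, of "\<lambda>_. 1"] by simp
  hence len: "min (length u) n = min (length v) n" by simp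
  show ?thesis
  proof (cases "length u \<ge> n")
    case True
    hence "length v \<ge> n" using len by (simp add: min_def split: if_splits)
    thus ?thesis using der_long[OF n2 True] der_long[OF n2] derivable.sym derivable.trans by blast
  next
    case False
    hence lu: "length u < n" by simp
    hence lv: "length v = length u" using len by (simp add: min_def split: if_splits)
    have sat': "\<forall>g. (\<forall>x. g x \<ge> 1) \<longrightarrow> min (ssum g v) n = min (ssum g u) n"
    proof (intro allI impI)
      fix g :: "nat \<Rightarrow> nat" assume "\<forall>x. g x \<ge> 1"
      thus "min (ssum g v) n = min (ssum g u) n" using sat by simp
    qed
    have st: "set v = set u" using set_eq_from_sat[OF sat lu] set_eq_from_sat[OF sat'] lu lv by auto
    define xs where "xs = remdups u"
    define es where "es = map (count_list u) xs"
    define fs where "fs = map (count_list v) xs"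
    have dxs: "distinct xs" and sxu: "set xs = set u" and sxv: "set xs = set v"
      using st by (auto simp: xs_def)
    have mu: "mset (pw xs es) = mset u" unfolding es_def by (rule mset_pw[OF dxs sxu])
    have mv: "mset (pw xs fs) = mset v" unfolding fs_def by (rule mset_pw[OF dxs sxv])
    have le: "length es = length xs" "length fs = length xs" by (auto simp: es_def fs_def)
    have se: "sum_list es = length u"
      using length_pw[OF le(1)] mu by (metis size_mset)
    have sf: "sum_list fs = length v"
      using length_pw[OF le(2)] mv by (metis size_mset)
    have m1: "length xs \<ge> 1" using ne(1) by (simp add: xs_def Suc_le_eq)
    have pos: "\<forall>i<length xs. es ! i \<ge> 1 \<and> fs ! i \<ge> 1"
    proof (intro allI impI)
      fix i assume i: "i < length xs"
      hence "xs ! i \<in> set u" "xs ! i \<in> set v" using sxu sxv nth_mem by blast+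
      hence "count_list u (xs ! i) \<noteq> 0" "count_list v (xs ! i) \<noteq> 0" by (simp_all add: count_list_0_iff)
      thus "es ! i \<ge> 1 \<and> fs ! i \<ge> 1" using i by (simp add: es_def fs_def)
    qed
    have cond: "\<forall>k<length xs. es ! k = fs ! k \<or> (sum_list es + es ! k \<ge> n \<and> sum_list fs + fs ! k \<ge> n)"
    proof (intro allI impI)
      fix k assume k: "k < length xs"
      define y where "y = xs ! k"
      define g where "g = (\<lambda>x. if x = y then 2 else (1::nat))"
      have "\<forall>x. g x \<ge> 1" by (simp add: g_def)
      hence "min (ssum g u) n = min (ssum g v) n" using sat by blast
      hence "min (length u + count_list u y) n = min (length v + count_list v y) n"
        using ssum_count[of y u] ssum_count[of y v] by (simp add: g_def)
      moreover have "es ! k = count_list u y" "fs ! k = count_list v y" using k by (simp_all add: es_def fs_def y_def)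
      ultimately show "es ! k = fs ! k \<or> (sum_list es + es ! k \<ge> n \<and> sum_list fs + fs ! k \<ge> n)"
        using se sf lv minlem by metis
    qed
    have ax: "(pw xs es, pw xs fs) \<in> Sigma_N n"
      by (rule sigma3_mem[OF m1 dxs le pos]) (use se sf lv lu cond in auto)
    have d1: "derivable (Sigma_N n) u (pw xs es)" using der_perm[OF ne(1) mu[symmetric]] .
    have d2: "derivable (Sigma_N n) v (pw xs fs)" using der_perm[OF ne(2) mv[symmetric]] .
    show ?thesis
      using derivable.trans[OF d1 derivable.trans[OF derivable.ax[OF ax] derivable.sym[OF d2]]] .
  qed
qed

lemma part1:
  assumes "n \<ge> 2"
  shows "eq_theory (Nn n) = {(u, v). derivable (Sigma_N n) u v}"
proof (intro set_eqI iffI)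
  fix p assume "p \<in> eq_theory (Nn n)"
  then obtain u v where p: "p = (u, v)" "u \<noteq> []" "v \<noteq> []" "satisfies (Nn n) (u, v)"
    by (auto simp: eq_theory_def)
  hence "\<forall>g. (\<forall>x. g x \<ge> 1) \<longrightarrow> min (ssum g u) n = min (ssum g v) n"
    using sat_N_iff[of n u v] assms by simp
  thus "p \<in> {(u, v). derivable (Sigma_N n) u v}" using complete[OF assms p(2,3)] p(1) by simp
next
  fix p assume "p \<in> {(u, v). derivable (Sigma_N n) u v}"
  then obtain u v where p: "p = (u, v)" "derivable (Sigma_N n) u v" by auto
  from derivable_sound[OF assms p(2)] have
    "u \<noteq> []" "v \<noteq> []" "\<forall>g. (\<forall>x. g x \<ge> 1) \<longrightarrow> min (ssum g u) n = min (ssum g v) n" by auto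
  thus "p \<in> eq_theory (Nn n)" using sat_N_iff[of n u v] assms p(1) by (simp add: eq_theory_def)
qed


fun pp :: "sg \<Rightarrow> nat \<Rightarrow> nat \<Rightarrow> nat" where
  "pp S a 0 = a"
| "pp S a (Suc 0) = a"
| "pp S a (Suc (Suc k)) = mul S a (pp S a (Suc k))"

lemma weval_rep: "weval S \<phi> (replicate (Suc k) x) = pp S (\<phi> x) (Suc k)"
  by (induction k) auto

definition pid :: "sg \<Rightarrow> nat \<Rightarrow> nat \<Rightarrow> bool" where
  "pid S p q \<longleftrightarrow> (\<forall>a\<in>carr S. pp S a p = pp S a q)"

lemma sat_pid:
  assumes "p \<ge> 1" "q \<ge> 1"
  shows "satisfies S (replicate p 0, replicate q 0) \<longleftrightarrow> pid S p q"
proof -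
  obtain p' where p: "p = Suc p'" using assms(1) by (cases p) auto
  obtain q' where q: "q = Suc q'" using assms(2) by (cases q) auto
  show ?thesis
  proof
    assume s: "satisfies S (replicate p 0, replicate q 0)"
    show "pid S p q" unfolding pid_def
    proof
      fix a assume "a \<in> carr S"
      hence "weval S (\<lambda>_. a) (replicate p 0) = weval S (\<lambda>_. a) (replicate q 0)"
        using s by (auto simp: satisfies_def)
      thus "pp S a p = pp S a q" unfolding p q weval_rep by simp
    qed
  next
    assume h: "pid S p q"
    show "satisfies S (replicate p 0, replicate q 0)"
      unfolding satisfies_def
    proof (intro allI impI)
      fix \<phi> :: "nat \<Rightarrow> nat" assume "\<forall>x. \<phi> x \<in> carr S"
      hence "\<phi> 0 \<in> carr S" by blast
      moreover have "weval S \<phi> (replicate p 0) = pp S (\<phi> 0) p" unfolding p by (rule weval_rep)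
      moreover have "weval S \<phi> (replicate q 0) = pp S (\<phi> 0) q" unfolding q by (rule weval_rep)
      ultimately show "weval S \<phi> (fst (replicate p 0, replicate q 0)) = weval S \<phi> (snd (replicate p 0, replicate q 0))"
        using h by (simp add: pid_def)
    qed
  qed
qed

lemma pp_Suc: "k \<ge> 1 \<Longrightarrow> pp S a (Suc k) = mul S a (pp S a k)"
  by (cases k) auto

lemma pp_closed: "fin_semigroup S \<Longrightarrow> a \<in> carr S \<Longrightarrow> pp S a k \<in> carr S"
  by (induction S a k rule: pp.induct) (auto simp: fin_semigroup_def)

lemma pp_sub: "subsg T S \<Longrightarrow> a \<in> carr T \<Longrightarrow> pp T a k = pp S a k"
proof (induction T a k rule: pp.induct)
  case (3 T a k)
  have "fin_semigroup T" using 3 by (simp add: subsg_def)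
  hence "pp T a (Suc k) \<in> carr T" using pp_closed 3 by blast
  thus ?case using 3 by (simp add: subsg_def)
qed auto

lemma pp_hom:
  assumes "fin_semigroup S" "\<forall>x\<in>carr S. \<forall>y\<in>carr S. h (mul S x y) = mul T (h x) (h y)" "a \<in> carr S"
  shows "h (pp S a k) = pp T (h a) k"
  using assms
proof (induction S a k rule: pp.induct)
  case (3 S a k)
  have "pp S a (Suc k) \<in> carr S" using pp_closed 3 by blast
  thus ?case using 3 by simp
qed auto

lemma pp_prod:
  "pp (prod_sg S T) (prod_encode (a, b)) k = prod_encode (pp S a k, pp T b k)"
proof -
  have "pp (prod_sg S T) (prod_encode (a, b)) (Suc k) = prod_encode (pp S a (Suc k), pp T b (Suc k))" for k
    by (induction k) (simp_all add: prod_sg_def prod_encode_inverse)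
  thus ?thesis by (cases k) auto
qed

lemma fin_prod:
  assumes "fin_semigroup S" "fin_semigroup T"
  shows "fin_semigroup (prod_sg S T)"
  using assms unfolding fin_semigroup_def prod_sg_def
  by (auto simp: prod_encode_inverse)

lemma pid_prod:
  assumes "pid S p q" "pid T p q"
  shows "pid (prod_sg S T) p q"
  unfolding pid_def
proof
  fix z assume "z \<in> carr (prod_sg S T)"
  then obtain x y where z: "z = prod_encode (x, y)" "x \<in> carr S" "y \<in> carr T"
    by (auto simp: prod_sg_def)
  show "pp (prod_sg S T) z p = pp (prod_sg S T) z q"
    unfolding z(1) pp_prod using assms z(2,3) by (simp add: pid_def)
qed

lemma pid_sub:
  assumes "subsg T S" "pid S p q" shows "pid T p q"
  unfolding pid_def
proof
  fix a assume a: "a \<in> carr T"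
  hence "a \<in> carr S" using assms(1) by (auto simp: subsg_def)
  thus "pp T a p = pp T a q" using pp_sub[OF assms(1) a] assms(2) by (simp add: pid_def)
qed

lemma pid_hom:
  assumes "fin_semigroup S" "hom_image T S" "pid S p q" shows "pid T p q"
proof -
  obtain h where h: "h ` carr S = carr T" "\<forall>x\<in>carr S. \<forall>y\<in>carr S. h (mul S x y) = mul T (h x) (h y)"
    using assms(2) by (auto simp: hom_image_def)
  show ?thesis unfolding pid_def
  proof
    fix b assume "b \<in> carr T"
    then obtain a where a: "a \<in> carr S" "b = h a" using h(1) by auto
    have "pp T b p = h (pp S a p)" using pp_hom[OF assms(1) h(2) a(1)] a(2) by simp
    also have "\<dots> = h (pp S a q)" using assms(3) a(1) by (simp add: pid_def)
    also have "\<dots> = pp T b q" using pp_hom[OF assms(1) h(2) a(1)] a(2) by simp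
    finally show "pp T b p = pp T b q" .
  qed
qed

definition Z0 :: sg where "Z0 = \<lparr>carr = {0}, mul = (\<lambda>_ _. 0)\<rparr>"

lemma Z0_fin: "fin_semigroup Z0"
  by (simp add: fin_semigroup_def Z0_def)

lemma pp_Z0: "pp Z0 0 k = 0"
  by (induction Z0 "0::nat" k rule: pp.induct) (simp_all add: Z0_def)

lemma Z0_carr: "carr Z0 = {0}" by (simp add: Z0_def)

lemma Z0_pid: "pid Z0 p q"
  unfolding pid_def Z0_carr using pp_Z0 by simp

lemma pv_pid: "pseudovariety {T. fin_semigroup T \<and> pid T p q}"
  unfolding pseudovariety_def
proof (intro conjI ballI allI impI)
  show "{T. fin_semigroup T \<and> pid T p q} \<noteq> {}" using Z0_fin Z0_pid by blast
next
  fix S T assume "S \<in> {T. fin_semigroup T \<and> pid T p q}" "T \<in> {T. fin_semigroup T \<and> pid T p q}"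
  thus "prod_sg S T \<in> {T. fin_semigroup T \<and> pid T p q}" using fin_prod pid_prod by blast
next
  fix S T assume "S \<in> {T. fin_semigroup T \<and> pid T p q}" "subsg T S"
  thus "T \<in> {T. fin_semigroup T \<and> pid T p q}" using pid_sub by (auto simp: subsg_def)
next
  fix S T assume "S \<in> {T. fin_semigroup T \<and> pid T p q}" "fin_semigroup T \<and> hom_image T S"
  thus "T \<in> {T. fin_semigroup T \<and> pid T p q}" using pid_hom by blast
qed auto

lemma pv_Int:
  assumes "pseudovariety A" "pseudovariety B" "x \<in> A" "x \<in> B"
  shows "pseudovariety (A \<inter> B)"
  unfolding pseudovariety_def
proof (intro conjI ballI allI impI)
  show "A \<inter> B \<noteq> {}" using assms(3,4) by blast
  fix X assume "X \<in> A \<inter> B"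
  thus "fin_semigroup X" using assms(1) unfolding pseudovariety_def by blast
next
  fix X Y assume "X \<in> A \<inter> B" "Y \<in> A \<inter> B"
  thus "prod_sg X Y \<in> A \<inter> B" using assms(1,2) unfolding pseudovariety_def by blast
next
  fix X Y assume "X \<in> A \<inter> B" "subsg Y X"
  thus "Y \<in> A \<inter> B" using assms(1,2) unfolding pseudovariety_def by blast
next
  fix X Y assume "X \<in> A \<inter> B" "fin_semigroup Y \<and> hom_image Y X"
  thus "Y \<in> A \<inter> B" using assms(1,2) unfolding pseudovariety_def by blast
qed

lemma gen_pv_least: "pseudovariety V \<Longrightarrow> S \<in> V \<Longrightarrow> gen_pv S \<subseteq> V"
  unfolding gen_pv_def by (rule Inter_lower) simp

lemma gen_pv_iff: "X \<in> gen_pv S \<longleftrightarrow> (\<forall>V. pseudovariety V \<and> S \<in> V \<longrightarrow> X \<in> V)"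
  unfolding gen_pv_def by auto

lemma gen_pv_mem: "S \<in> gen_pv S"
  unfolding gen_pv_iff by simp

lemma gen_pv_pv:
  assumes "pseudovariety V" "S \<in> V"
  shows "pseudovariety (gen_pv S)"
  unfolding pseudovariety_def
proof (intro conjI ballI allI impI)
  show "gen_pv S \<noteq> {}" using gen_pv_mem by blast
  fix X assume "X \<in> gen_pv S"
  hence "X \<in> V" using assms gen_pv_iff by blast
  thus "fin_semigroup X" using assms(1) unfolding pseudovariety_def by blast
next
  fix X Y assume a: "X \<in> gen_pv S" "Y \<in> gen_pv S"
  show "prod_sg X Y \<in> gen_pv S" unfolding gen_pv_iff
  proof (intro allI impI)
    fix U assume u: "pseudovariety U \<and> S \<in> U"
    hence "X \<in> U" "Y \<in> U" using a gen_pv_iff by blast+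
    thus "prod_sg X Y \<in> U" using u unfolding pseudovariety_def by blast
  qed
next
  fix X Y assume a: "X \<in> gen_pv S" "subsg Y X"
  show "Y \<in> gen_pv S" unfolding gen_pv_iff
  proof (intro allI impI)
    fix U assume u: "pseudovariety U \<and> S \<in> U"
    hence "X \<in> U" using a gen_pv_iff by blast
    thus "Y \<in> U" using u a(2) unfolding pseudovariety_def by blast
  qed
next
  fix X Y assume a: "X \<in> gen_pv S" "fin_semigroup Y \<and> hom_image Y X"
  show "Y \<in> gen_pv S" unfolding gen_pv_iff
  proof (intro allI impI)
    fix U assume u: "pseudovariety U \<and> S \<in> U"
    hence "X \<in> U" using a gen_pv_iff by blast
    thus "Y \<in> U" using u a(2) unfolding pseudovariety_def by blast
  qed
qed


lemma Nn_carr: "carr (Nn n) = {1..n}" by (simp add: Nn_def)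
lemma Nn_mul: "mul (Nn n) i j = min (i + j) n" by (simp add: Nn_def)

lemma Nn_fin: "n \<ge> 1 \<Longrightarrow> fin_semigroup (Nn n)"
  unfolding fin_semigroup_def Nn_carr Nn_mul by auto

lemma pp_Nn: "a \<in> {1..n} \<Longrightarrow> pp (Nn n) a (Suc k) = min (Suc k * a) n"
proof (induction k)
  case 0
  then show ?case by simp
next
  case (Suc k)
  have "pp (Nn n) a (Suc (Suc k)) = min (a + min (Suc k * a) n) n"
    using Suc by (simp add: Nn_mul)
  also have "\<dots> = min (Suc (Suc k) * a) n" by (simp add: min_def)
  finally show ?case .
qed

lemma Nn_pid1: "n \<ge> 1 \<Longrightarrow> pid (Nn n) (n + 1) n"
  unfolding pid_def Nn_carr
proof
  fix a assume n: "n \<ge> 1" and a: "a \<in> {1..n}"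
  obtain m where m: "n = Suc m" using n by (cases n) auto
  have a1: "1 \<le> a" using a by simp
  have "Suc n * 1 \<le> Suc n * a" by (rule mult_le_mono2[OF a1])
  hence "n \<le> Suc n * a" by simp
  hence "pp (Nn n) a (Suc n) = n" using pp_Nn[OF a, of n] by simp
  moreover have "Suc m * 1 \<le> Suc m * a" by (rule mult_le_mono2[OF a1])
  hence "n \<le> Suc m * a" using m by simp
  hence "pp (Nn n) a n = n" using pp_Nn[OF a, of m] m by simp
  ultimately show "pp (Nn n) a (n + 1) = pp (Nn n) a n" by simp
qed

lemma Nn_not_pid: "n \<ge> 2 \<Longrightarrow> \<not> pid (Nn n) n (n - 1)"
proof
  assume n: "n \<ge> 2" and p: "pid (Nn n) n (n - 1)"
  have a: "(1::nat) \<in> {1..n}" using n by simp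
  obtain m where m: "n = Suc (Suc m)" using n by (metis add_2_eq_Suc le_Suc_ex)
  have "pp (Nn n) 1 n = n" using pp_Nn[OF a, of "Suc m"] m by simp
  moreover have "pp (Nn n) 1 (n - 1) = n - 1" using pp_Nn[OF a, of m] m by simp
  moreover have "pp (Nn n) 1 n = pp (Nn n) 1 (n - 1)" using p a by (simp add: pid_def Nn_carr)
  ultimately show False using n by simp
qed


lemma pp_add:
  assumes "fin_semigroup T" "t \<in> carr T"
  shows "pp T t (Suc i + Suc j) = mul T (pp T t (Suc i)) (pp T t (Suc j))"
proof (induction i)
  case 0
  then show ?case by simp
next
  case (Suc i)
  have c1: "pp T t (Suc i) \<in> carr T" "pp T t (Suc j) \<in> carr T" using pp_closed assms by blast+
  have "pp T t (Suc (Suc i) + Suc j) = mul T t (pp T t (Suc i + Suc j))" by simp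
  also have "\<dots> = mul T t (mul T (pp T t (Suc i)) (pp T t (Suc j)))" using Suc by simp
  also have "\<dots> = mul T (mul T t (pp T t (Suc i))) (pp T t (Suc j))"
    using assms c1 unfolding fin_semigroup_def by metis
  also have "\<dots> = mul T (pp T t (Suc (Suc i))) (pp T t (Suc j))" by simp
  finally show ?case .
qed

lemma pp_add':
  assumes "fin_semigroup T" "t \<in> carr T" "i \<ge> 1" "j \<ge> 1"
  shows "pp T t (i + j) = mul T (pp T t i) (pp T t j)"
proof -
  obtain i' j' where "i = Suc i'" "j = Suc j'" using assms(3,4) by (metis Suc_le_D One_nat_def)
  thus ?thesis using pp_add[OF assms(1,2)] by simp
qed

lemma key:
  assumes n2: "n \<ge> 2" and fT: "fin_semigroup T" and t: "t \<in> carr T"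
    and p1: "pid T (n + 1) n" and ne: "pp T t n \<noteq> pp T t (n - 1)"
  shows "\<exists>T'. subsg T' T \<and> hom_image (Nn n) T'"
proof -
  let ?p = "pp T t"
  have sat: "?p (n + d) = ?p n" for d
  proof (induction d)
    case (Suc d)
    have "?p (n + Suc d) = mul T t (?p (n + d))" using pp_Suc[of "n + d" T t] n2 by simp
    also have "\<dots> = mul T t (?p n)" using Suc by simp
    also have "\<dots> = ?p (n + 1)" using pp_Suc[of n T t] n2 by simp
    also have "\<dots> = ?p n" using p1 t by (simp add: pid_def)
    finally show ?case .
  qed simp
  have cap: "i \<ge> n \<Longrightarrow> ?p i = ?p n" for i using sat[of "i - n"] by simp
  have mulp: "i \<ge> 1 \<Longrightarrow> j \<ge> 1 \<Longrightarrow> mul T (?p i) (?p j) = ?p (min (i + j) n)" for i j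
    using pp_add'[OF fT t, of i j] cap[of "i + j"] by (simp add: min_def)
  have neq: "?p i \<noteq> ?p j" if ij: "1 \<le> i" "i < j" "j \<le> n" for i j
  proof
    assume eq: "?p i = ?p j"
    have "?p (n - 1) = ?p n"
    proof (cases "i = n - 1")
      case True
      hence "j = n" using ij by simp
      thus ?thesis using eq True by simp
    next
      case False
      define d where "d = n - 1 - i"
      have d1: "d \<ge> 1" using False ij by (simp add: d_def)
      have "?p (n - 1) = ?p (d + i)" using ij False by (simp add: d_def)
      also have "\<dots> = mul T (?p d) (?p i)" using pp_add'[OF fT t d1 ij(1)] .
      also have "\<dots> = mul T (?p d) (?p j)" using eq by simp
      also have "\<dots> = ?p (d + j)" using pp_add'[OF fT t d1, of j] ij by simp
      also have "\<dots> = ?p n" using cap[of "d + j"] ij False by (simp add: d_def)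
      finally show ?thesis .
    qed
    thus False using ne by simp
  qed
  have inj: "inj_on ?p {1..n}"
  proof (rule inj_onI)
    fix i j assume "i \<in> {1..n}" "j \<in> {1..n}" "?p i = ?p j"
    thus "i = j" using neq[of i j] neq[of j i] by (cases i j rule: linorder_cases) auto
  qed
  define T' where "T' = \<lparr>carr = ?p ` {1..n}, mul = mul T\<rparr>"
  have cT: "carr T' \<subseteq> carr T" using pp_closed[OF fT t] by (auto simp: T'_def)
  have clos: "\<forall>x\<in>carr T'. \<forall>y\<in>carr T'. mul T' x y \<in> carr T'"
  proof (intro ballI)
    fix x y assume "x \<in> carr T'" "y \<in> carr T'"
    then obtain i j where "i \<in> {1..n}" "j \<in> {1..n}" "x = ?p i" "y = ?p j" by (auto simp: T'_def)
    moreover have "min (i + j) n \<in> {1..n}" using calculation n2 by auto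
    ultimately show "mul T' x y \<in> carr T'" using mulp[of i j] by (auto simp: T'_def)
  qed
  have fT': "fin_semigroup T'"
    unfolding fin_semigroup_def
  proof (intro conjI)
    show "finite (carr T')" by (simp add: T'_def)
    show "carr T' \<noteq> {}" using n2 by (simp add: T'_def)
    show "\<forall>x\<in>carr T'. \<forall>y\<in>carr T'. mul T' x y \<in> carr T'" by (rule clos)
    show "\<forall>x\<in>carr T'. \<forall>y\<in>carr T'. \<forall>z\<in>carr T'. mul T' (mul T' x y) z = mul T' x (mul T' y z)"
      using cT fT unfolding fin_semigroup_def by (simp add: T'_def subset_iff)
  qed
  have sub: "subsg T' T" unfolding subsg_def using fT' cT by (simp add: T'_def)
  define h where "h = the_inv_into {1..n} ?p"
  have hp: "i \<in> {1..n} \<Longrightarrow> h (?p i) = i" for i unfolding h_def by (rule the_inv_into_f_f[OF inj])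
  have "hom_image (Nn n) T'"
    unfolding hom_image_def
  proof (intro exI conjI)
    have "h ` (?p ` {1..n}) = {1..n}" unfolding h_def by (rule the_inv_into_onto[OF inj])
    thus "h ` carr T' = carr (Nn n)" by (simp add: Nn_carr T'_def)
    show "\<forall>x\<in>carr T'. \<forall>y\<in>carr T'. h (mul T' x y) = mul (Nn n) (h x) (h y)"
    proof (intro ballI)
      fix x y assume "x \<in> carr T'" "y \<in> carr T'"
      then obtain i j where ij: "i \<in> {1..n}" "j \<in> {1..n}" "x = ?p i" "y = ?p j" by (auto simp: T'_def)
      have "min (i + j) n \<in> {1..n}" using ij n2 by auto
      thus "h (mul T' x y) = mul (Nn n) (h x) (h y)"
        using ij mulp[of i j] hp by (simp add: T'_def Nn_mul)
    qed
  qed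
  thus ?thesis using sub by blast
qed


theorem proposition5p8:
  fixes n :: nat
  assumes "n \<ge> 2"
  shows "eq_theory (Nn n) = {(u, v). derivable (Sigma_N n) u v}
       \<and> maximal_subpv
           {T \<in> gen_pv (Nn n). satisfies T (replicate n 0, replicate (n - 1) 0)}
           (gen_pv (Nn n))
       \<and> (\<forall>V. maximal_subpv V (gen_pv (Nn n)) \<longrightarrow>
           V = {T \<in> gen_pv (Nn n). satisfies T (replicate n 0, replicate (n - 1) 0)})"
proof -
  have n1: "n \<ge> 1" using assms by simp
  let ?N = "Nn n"
  let ?W = "gen_pv ?N"
  let ?V0 = "{T \<in> ?W. satisfies T (replicate n 0, replicate (n - 1) 0)}"
  let ?P1 = "{T. fin_semigroup T \<and> pid T (n + 1) n}"
  let ?P0 = "{T. fin_semigroup T \<and> pid T n (n - 1)}"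
  have NP1: "?N \<in> ?P1" using Nn_fin[OF n1] Nn_pid1[OF n1] by simp
  have Wpv: "pseudovariety ?W" by (rule gen_pv_pv[OF pv_pid NP1])
  have WP1: "?W \<subseteq> ?P1" by (rule gen_pv_least[OF pv_pid NP1])
  have NW: "?N \<in> ?W" by (rule gen_pv_mem)
  have Wfin: "T \<in> ?W \<Longrightarrow> fin_semigroup T" for T using WP1 by blast
  have V0eq: "?V0 = ?W \<inter> ?P0"
    using sat_pid[of n "n - 1"] assms Wfin by auto
  have Z0W: "Z0 \<in> ?W"
  proof -
    have "hom_image Z0 ?N" unfolding hom_image_def
      by (rule exI[of _ "\<lambda>_. 0"]) (use n1 in \<open>auto simp: Z0_def Nn_carr\<close>)
    thus ?thesis using Wpv NW Z0_fin unfolding pseudovariety_def by blast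
  qed
  have V0pv: "pseudovariety ?V0"
    unfolding V0eq by (rule pv_Int[OF Wpv pv_pid Z0W]) (use Z0_fin Z0_pid in blast)
  have NV0: "?N \<notin> ?V0" unfolding V0eq using Nn_not_pid[OF assms] by blast
  have V0W: "?V0 \<subset> ?W" using NV0 NW by blast
  have crit: "?W \<subseteq> U" if U: "pseudovariety U" "U \<subseteq> ?W" "\<not> U \<subseteq> ?V0" for U
  proof -
    obtain T where T: "T \<in> U" "T \<notin> ?V0" using U(3) by blast
    have TW: "T \<in> ?W" using T U(2) by blast
    hence fT: "fin_semigroup T" and p1: "pid T (n + 1) n" using WP1 by blast+
    have "\<not> pid T n (n - 1)" using T(2) TW V0eq fT by blast
    then obtain t where t: "t \<in> carr T" "pp T t n \<noteq> pp T t (n - 1)" unfolding pid_def by blast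
    obtain T' where T': "subsg T' T" "hom_image ?N T'" using key[OF assms fT t(1) p1 t(2)] by blast
    have "T' \<in> U" using U(1) T(1) T'(1) unfolding pseudovariety_def by blast
    hence "?N \<in> U" using U(1) T'(2) Nn_fin[OF n1] unfolding pseudovariety_def by blast
    thus ?thesis by (rule gen_pv_least[OF U(1)])
  qed
  have max: "maximal_subpv ?V0 ?W"
    unfolding maximal_subpv_def
  proof (intro conjI allI impI)
    show "pseudovariety ?V0" by (rule V0pv)
    show "?V0 \<subset> ?W" by (rule V0W)
    fix U assume U: "pseudovariety U \<and> ?V0 \<subseteq> U \<and> U \<subset> ?W"
    show "U = ?V0"
    proof (rule ccontr)
      assume "U \<noteq> ?V0"
      hence "\<not> U \<subseteq> ?V0" using U by blast
      hence "?W \<subseteq> U" using crit U by blast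
      thus False using U by blast
    qed
  qed
  have uniq: "V = ?V0" if V: "maximal_subpv V ?W" for V
  proof -
    have Vpv: "pseudovariety V" and VW: "V \<subset> ?W"
      and Vm: "\<And>U. pseudovariety U \<and> V \<subseteq> U \<and> U \<subset> ?W \<Longrightarrow> U = V"
      using V unfolding maximal_subpv_def by blast+
    have "V \<subseteq> ?V0"
    proof (rule ccontr)
      assume "\<not> V \<subseteq> ?V0"
      hence "?W \<subseteq> V" using crit Vpv VW by blast
      thus False using VW by blast
    qed
    hence "?V0 = V" using Vm V0pv V0W by blast
    thus ?thesis by simp
  qed
  show ?thesis using part1[OF assms] max uniq by blast
qed

end
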